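(* Let $\Gamma\le\mathrm{Iso}(\mathbb{R}^{r,s})$ be a subgroup whose centralizer in $\mathrm{Iso}(\mathbb{R}^{r,s})$ has an open orbit in $\mathbb{R}^{r,s}$, and let $n=r+s$. If the linear holonomy group $\mathrm{hol}(\Gamma)$ is non-abelian, then $n\ge 8$.
   Context: $\mathbb{R}^{r,s}$ denotes $\mathbb{R}^{n}$, $n=r+s$, with a nondegenerate symmetric bilinear form of signature $(r,s)$; $\mathrm{Iso}(\mathbb{R}^{r,s})$ is its group of affine isometries, whose elements are written $\gamma=(I+A,v)\colon x\mapsto(I+A)x+v$; $\mathrm{hol}(\Gamma)=\{I+A\mid (I+A,v)\in\Gamma\}$. Known facts (Wolf) for such $\Gamma$: every $(I+A,v)\in\Gamma$ satisfies $A^2=0$, $Av=0$, $\langle Ax,y\rangle=-\langle x,Ay\rangle$, $\ker A=(\operatorname{im}A)^\perp$, $\operatorname{im}A$ totally isotropic; for $\gamma_i=(I+A_i,v_i)\in\Gamma$ one has $A_1A_2A_3=0$ and $[\gamma_1,\gamma_2]=(I+2A_1A_2,2A_1v_2)$; $\mathrm{hol}(\Gamma)$ is abelian iff $A_1A_2=0$ for all $(I+A_1,v_1),(I+A_2,v_2)\in\Gamma$. *)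

theory Defs
  imports "HOL-Analysis.Analysis"
begin

text \<open>The pseudo-Euclidean space R^{r,s}: real^'n with the diagonal form
  given by a sign vector eps (eps i = 1 for r coordinates, -1 for s coordinates).\<close>

definition pform :: "('n::finite \<Rightarrow> real) \<Rightarrow> real^'n \<Rightarrow> real^'n \<Rightarrow> real" where
  "pform eps x y = (\<Sum>i\<in>UNIV. eps i * (x $ i) * (y $ i))"

definition Iso :: "('n::finite \<Rightarrow> real) \<Rightarrow> (real^'n \<Rightarrow> real^'n) set" where
  "Iso eps = {f. \<exists>(A::real^'n^'n) v. (\<forall>x. f x = A *v x + v) \<and>
                 (\<forall>x y. pform eps (A *v x) (A *v y) = pform eps x y)}"

definition is_subgroup_Iso :: "('n::finite \<Rightarrow> real) \<Rightarrow> (real^'n \<Rightarrow> real^'n) set \<Rightarrow> bool" where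
  "is_subgroup_Iso eps \<Gamma> \<longleftrightarrow> \<Gamma> \<subseteq> Iso eps \<and> id \<in> \<Gamma> \<and>
     (\<forall>f\<in>\<Gamma>. \<forall>g\<in>\<Gamma>. f \<circ> g \<in> \<Gamma>) \<and> (\<forall>f\<in>\<Gamma>. inv f \<in> \<Gamma>)"

definition centralizer_Iso :: "('n::finite \<Rightarrow> real) \<Rightarrow> (real^'n \<Rightarrow> real^'n) set \<Rightarrow> (real^'n \<Rightarrow> real^'n) set" where
  "centralizer_Iso eps \<Gamma> = {h \<in> Iso eps. \<forall>g\<in>\<Gamma>. h \<circ> g = g \<circ> h}"

definition has_open_orbit :: "(real^'n::finite \<Rightarrow> real^'n) set \<Rightarrow> bool" where
  "has_open_orbit H \<longleftrightarrow> (\<exists>x. open ((\<lambda>h. h x) ` H))"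

definition linpart :: "(real^'n::finite \<Rightarrow> real^'n) \<Rightarrow> (real^'n \<Rightarrow> real^'n)" where
  "linpart f = (\<lambda>x. f x - f 0)"

definition hol :: "(real^'n::finite \<Rightarrow> real^'n) set \<Rightarrow> (real^'n \<Rightarrow> real^'n) set" where
  "hol \<Gamma> = linpart ` \<Gamma>"

definition is_abelian :: "('a \<Rightarrow> 'a) set \<Rightarrow> bool" where
  "is_abelian H \<longleftrightarrow> (\<forall>f\<in>H. \<forall>g\<in>H. f \<circ> g = g \<circ> f)"

end

theory Submission
  imports Defs
begin

lemma pform_sym: "pform e x y = pform e y x"
  by (simp add: pform_def mult_ac)
lemma pform_add_left: "pform e (x + y) z = pform e x z + pform e y z"
  by (simp add: pform_def algebra_simps sum.distrib)
lemma pform_add_right: "pform e z (x + y) = pform e z x + pform e z y"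
  by (simp add: pform_def algebra_simps sum.distrib)
lemma pform_scale_left: "pform e (c *\<^sub>R x) y = c * pform e x y"
  by (simp add: pform_def sum_distrib_left mult_ac)
lemma pform_scale_right: "pform e y (c *\<^sub>R x) = c * pform e y x"
  by (simp add: pform_def sum_distrib_left mult_ac)
lemma pform_minus_left: "pform e (- x) y = - pform e x y"
  by (simp add: pform_def sum_negf)
lemma pform_minus_right: "pform e y (- x) = - pform e y x"
  by (simp add: pform_def sum_negf)
lemma pform_zero_right: "pform e y 0 = 0"
  by (simp add: pform_def)

lemma pform_self_J:
  assumes "\<forall>i. e i = 1 \<or> e i = -1"
  shows "pform e z (\<chi> i. e i * z $ i) = z \<bullet> z"
proof -
  have "\<And>i. e i * z $ i * (e i * z $ i) = z $ i * z $ i"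
  proof -
    fix i have "e i * e i = 1" using assms by (metis mult_1 mult_minus1 minus_minus)
    then show "e i * z $ i * (e i * z $ i) = z $ i * z $ i"
      by (metis mult.assoc mult.commute mult_1)
  qed
  then have "(\<Sum>i\<in>UNIV. e i * z $ i * (e i * z $ i)) = (\<Sum>i\<in>UNIV. z $ i * z $ i)"
    by (rule sum.cong[OF refl])
  then show ?thesis by (simp add: pform_def inner_vec_def)
qed

lemma pform_nondeg:
  assumes "\<forall>i. e i = 1 \<or> e i = -1" and "\<forall>x. pform e x z = 0"
  shows "z = 0"
proof -
  have "pform e z (\<chi> i. e i * z $ i) = 0" using assms(2) pform_sym by metis
  then show ?thesis using pform_self_J[OF assms(1)] by simp
qed

lemma indep_ext:
  fixes f :: "'a::euclidean_space \<Rightarrow> 'b::euclidean_space"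
  assumes lf: "linear f" and iS: "independent S" and fS: "\<forall>x\<in>S. f x = 0"
    and iU: "independent U" and UW: "U \<subseteq> f ` W"
  shows "\<exists>T. T \<subseteq> W \<and> independent (S \<union> T) \<and> card (S \<union> T) = card S + card U"
proof -
  define g where "g u = (SOME x. x \<in> W \<and> f x = u)" for u
  have gW: "g u \<in> W \<and> f (g u) = u" if "u \<in> U" for u
    unfolding g_def by (rule someI_ex) (use UW that in auto)
  have inj: "inj_on g U" by (metis gW inj_onI)
  define T where "T = g ` U"
  have fU: "finite U" using iU independent_explicit by blast
  have fSS: "finite S" using iS independent_explicit by blast
  have fT: "finite T" using fU T_def by simp
  have cT: "card T = card U" using inj T_def card_image by blast
  have z: "0 \<notin> U" using iU real_vector.dependent_zero by blast
  have disj: "S \<inter> T = {}"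
  proof (rule ccontr)
    assume "S \<inter> T \<noteq> {}"
    then obtain t where "t \<in> S" "t \<in> T" by auto
    then obtain u where "u \<in> U" "t = g u" using T_def by auto
    then show False using gW fS \<open>t \<in> S\<close> z by fastforce
  qed
  have indep: "independent (S \<union> T)"
    unfolding independent_explicit
  proof (intro conjI allI impI ballI)
    show "finite (S \<union> T)" using fT fSS by simp
    fix c assume s0: "(\<Sum>v\<in>S \<union> T. c v *\<^sub>R v) = 0"
    then have s1: "(\<Sum>v\<in>S. c v *\<^sub>R v) + (\<Sum>v\<in>T. c v *\<^sub>R v) = 0"
      using sum.union_disjoint[OF fSS fT disj, of "\<lambda>v. c v *\<^sub>R v"] by simp
    have "f ((\<Sum>v\<in>S. c v *\<^sub>R v) + (\<Sum>v\<in>T. c v *\<^sub>R v)) = 0"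
      using s1 linear_0[OF lf] by simp
    then have "(\<Sum>v\<in>S. c v *\<^sub>R f v) + (\<Sum>v\<in>T. c v *\<^sub>R f v) = 0"
      by (simp add: linear_add[OF lf] linear_sum[OF lf] linear_cmul[OF lf])
    then have "(\<Sum>v\<in>T. c v *\<^sub>R f v) = 0" using fS by simp
    then have "(\<Sum>u\<in>U. c (g u) *\<^sub>R f (g u)) = 0"
      unfolding T_def using sum.reindex[OF inj, of "\<lambda>v. c v *\<^sub>R f v"] by simp
    then have sU: "(\<Sum>u\<in>U. c (g u) *\<^sub>R u) = 0"
      using gW by (metis (no_types, lifting) sum.cong)
    have allU: "\<forall>c. (\<Sum>v\<in>U. c v *\<^sub>R v) = 0 \<longrightarrow> (\<forall>v\<in>U. c v = 0)"
      using iU unfolding independent_explicit by blast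
    have cU: "\<forall>u\<in>U. c (g u) = 0" using allU[rule_format, OF sU] by blast
    then have cT0: "\<forall>v\<in>T. c v = 0" unfolding T_def by auto
    then have "(\<Sum>v\<in>T. c v *\<^sub>R v) = 0" by simp
    then have "(\<Sum>v\<in>S. c v *\<^sub>R v) = 0" using s1 by simp
    moreover have "\<forall>c. (\<Sum>v\<in>S. c v *\<^sub>R v) = 0 \<longrightarrow> (\<forall>v\<in>S. c v = 0)"
      using iS unfolding independent_explicit by blast
    ultimately have "\<forall>v\<in>S. c v = 0" by blast
    fix v assume "v \<in> S \<union> T"
    then show "c v = 0" using cT0 \<open>\<forall>v\<in>S. c v = 0\<close> by blast
  qed
  have "T \<subseteq> W" using gW T_def by auto
  moreover have "card (S \<union> T) = card S + card U"
    using card_Un_disjoint[OF fSS fT disj] cT by simp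
  ultimately show ?thesis using indep by blast
qed

definition Ap :: "(real^'n::finite \<Rightarrow> real^'n) \<Rightarrow> real^'n \<Rightarrow> real^'n" where
  "Ap g x = g x - g 0 - x"

lemma Iso_Ap:
  assumes "g \<in> Iso e"
  shows "linear (Ap g) \<and> (\<forall>x. g x = g 0 + x + Ap g x) \<and>
         (\<forall>x y. pform e (x + Ap g x) (y + Ap g y) = pform e x y)"
proof -
  obtain M v where gM: "\<forall>x. g x = M *v x + v" and pM: "\<forall>x y. pform e (M *v x) (M *v y) = pform e x y"
    using assms unfolding Iso_def by blast
  have g0: "g 0 = v" using gM by simp
  have A: "Ap g = (\<lambda>x. M *v x - x)" unfolding Ap_def using gM g0 by (intro ext) simp
  have "linear (Ap g)" unfolding A
    by (intro linear_compose_sub matrix_vector_mul_linear) (simp add: linear_iff)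
  moreover have "\<forall>x. g x = g 0 + x + Ap g x" using A gM g0 by simp
  moreover have "\<forall>x y. pform e (x + Ap g x) (y + Ap g y) = pform e x y" using A pM by simp
  ultimately show ?thesis by blast
qed

lemma Iso_diff:
  assumes "h \<in> Iso e"
  shows "pform e (h a - h b) (h c - h d) = pform e (a - b) (c - d)"
proof -
  obtain M v where gM: "\<forall>x. h x = M *v x + v" and pM: "\<forall>x y. pform e (M *v x) (M *v y) = pform e x y"
    using assms unfolding Iso_def by blast
  have "h a - h b = M *v (a - b)" "h c - h d = M *v (c - d)"
    using gM by (simp_all add: matrix_vector_mult_diff_distrib)
  then show ?thesis using pM by simp
qed

lemma pform_expand:
  "pform e (d1 + t *\<^sub>R a1) (d2 + t *\<^sub>R a2) =
   pform e d1 d2 + t * (pform e d1 a2 + pform e a1 d2) + t * t * pform e a1 a2"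
  by (simp add: pform_add_left pform_add_right pform_scale_left pform_scale_right algebra_simps)

lemma Qzero:
  assumes sg: "is_subgroup_Iso e \<Gamma>" and oo: "has_open_orbit (centralizer_Iso e \<Gamma>)"
    and g1: "g1 \<in> \<Gamma>" and g2: "g2 \<in> \<Gamma>"
  shows "pform e (Ap g1 z) (Ap g2 z) = 0"
proof -
  let ?Z = "centralizer_Iso e \<Gamma>"
  obtain x0 where op: "open ((\<lambda>h. h x0) ` ?Z)" using oo unfolding has_open_orbit_def by blast
  have idI: "id \<in> Iso e" unfolding Iso_def
    by (rule CollectI, rule exI[of _ "mat 1"], rule exI[of _ 0]) simp
  have "id \<in> ?Z" unfolding centralizer_Iso_def using idI by simp
  then have "id x0 \<in> (\<lambda>h. h x0) ` ?Z" by (rule imageI)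
  then have "x0 \<in> (\<lambda>h. h x0) ` ?Z" by simp
  then obtain ee where ee: "ee > 0" "ball x0 ee \<subseteq> (\<lambda>h. h x0) ` ?Z"
    using op open_contains_ball by blast
  have G: "\<Gamma> \<subseteq> Iso e" using sg unfolding is_subgroup_Iso_def by blast
  have const: "pform e (g1 y - y) (g2 y - y) = pform e (g1 x0 - x0) (g2 x0 - x0)"
    if yO: "y \<in> (\<lambda>h. h x0) ` ?Z" for y
  proof -
    obtain h where h: "h \<in> ?Z" "y = h x0" using yO by blast
    have hI: "h \<in> Iso e" and c1: "h \<circ> g1 = g1 \<circ> h" and c2: "h \<circ> g2 = g2 \<circ> h"
      using h g1 g2 unfolding centralizer_Iso_def by auto
    have "g1 y = h (g1 x0)" using c1 h(2) by (metis comp_apply)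
    moreover have "g2 y = h (g2 x0)" using c2 h(2) by (metis comp_apply)
    ultimately show ?thesis using Iso_diff[OF hI] h(2) by simp
  qed
  have I1: "linear (Ap g1) \<and> (\<forall>x. g1 x = g1 0 + x + Ap g1 x)" using Iso_Ap G g1 by blast
  have I2: "linear (Ap g2) \<and> (\<forall>x. g2 x = g2 0 + x + Ap g2 x)" using Iso_Ap G g2 by blast
  have step: "g (x0 + s *\<^sub>R z) - (x0 + s *\<^sub>R z) = (g x0 - x0) + s *\<^sub>R Ap g z"
    if "linear (Ap g) \<and> (\<forall>x. g x = g 0 + x + Ap g x)" for g :: "real^'a \<Rightarrow> real^'a" and s
  proof -
    have "Ap g (x0 + s *\<^sub>R z) = Ap g x0 + s *\<^sub>R Ap g z"
      using that linear_add linear_cmul by metis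
    moreover have "g (x0 + s *\<^sub>R z) = g 0 + (x0 + s *\<^sub>R z) + Ap g (x0 + s *\<^sub>R z)"
      "g x0 = g 0 + x0 + Ap g x0" using that by blast+
    ultimately show ?thesis by (simp add: algebra_simps)
  qed
  define t where "t = ee / (2 * (norm z + 1))"
  have npos: "(0::real) < 2 * (norm z + 1)" by (smt (verit) norm_ge_zero)
  then have tpos: "t > 0" unfolding t_def using ee(1) by (simp only: divide_pos_pos)
  have "t * norm z < ee"
  proof -
    have "t * norm z = ee * (norm z / (2 * (norm z + 1)))" unfolding t_def by simp
    also have "norm z / (2 * (norm z + 1)) < 1"
      using npos by (simp add: divide_less_eq)
    then have "ee * (norm z / (2 * (norm z + 1))) < ee * 1" using ee(1) by (intro mult_strict_left_mono) auto
    finally show ?thesis by simp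
  qed
  then have inb: "x0 + s *\<^sub>R z \<in> ball x0 ee" if "s = t \<or> s = -t" for s
    using that tpos by (auto simp: dist_norm)
  let ?d1 = "g1 x0 - x0" and ?d2 = "g2 x0 - x0" and ?a1 = "Ap g1 z" and ?a2 = "Ap g2 z"
  have F: "pform e ?d1 ?d2 + s * (pform e ?d1 ?a2 + pform e ?a1 ?d2) + s * s * pform e ?a1 ?a2
           = pform e ?d1 ?d2" if "s = t \<or> s = -t" for s
  proof -
    have "pform e (g1 (x0 + s *\<^sub>R z) - (x0 + s *\<^sub>R z)) (g2 (x0 + s *\<^sub>R z) - (x0 + s *\<^sub>R z))
          = pform e ?d1 ?d2" using const inb[OF that] ee(2) by blast
    then show ?thesis using step[OF I1] step[OF I2] pform_expand by metis
  qed
  define b where "b = pform e ?d1 ?a2 + pform e ?a1 ?d2"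
  define q where "q = pform e ?a1 ?a2"
  have "t * b + t * t * q = 0" "- (t * b) + t * t * q = 0"
    using F[of t] F[of "-t"] unfolding b_def q_def by simp_all
  then have "t * t * pform e ?a1 ?a2 = 0" unfolding q_def by linarith
  then show ?thesis using tpos by simp
qed

theorem theorem5p1:
  fixes eps :: "'n::finite \<Rightarrow> real" and \<Gamma> :: "(real^'n \<Rightarrow> real^'n) set" and r s :: nat
  assumes "\<forall>i. eps i = 1 \<or> eps i = -1"
    and "r = card {i. eps i = 1}" and "s = card {i. eps i = -1}"
    and "is_subgroup_Iso eps \<Gamma>"
    and "has_open_orbit (centralizer_Iso eps \<Gamma>)"
    and "\<not> is_abelian (hol \<Gamma>)"
  shows "r + s \<ge> 8"
proof -
  note epsA = assms(1)
  have G: "\<Gamma> \<subseteq> Iso eps" using assms(4) unfolding is_subgroup_Iso_def by blast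
  have L: "linear (Ap g) \<and> (\<forall>x. g x = g 0 + x + Ap g x) \<and>
         (\<forall>x y. pform eps (x + Ap g x) (y + Ap g y) = pform eps x y)" if "g \<in> \<Gamma>" for g
    using Iso_Ap G that by blast
  have Q: "pform eps (Ap g1 z) (Ap g2 z) = 0" if "g1 \<in> \<Gamma>" "g2 \<in> \<Gamma>" for g1 g2 z
    using Qzero[OF assms(4) assms(5) that] .
  have pol: "pform eps (Ap g1 x) (Ap g2 y) + pform eps (Ap g1 y) (Ap g2 x) = 0"
    if g: "g1 \<in> \<Gamma>" "g2 \<in> \<Gamma>" for g1 g2 x y
  proof -
    have "Ap g1 (x + y) = Ap g1 x + Ap g1 y" "Ap g2 (x + y) = Ap g2 x + Ap g2 y"
      using L[OF g(1)] L[OF g(2)] linear_add by blast+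
    then have "pform eps (Ap g1 x + Ap g1 y) (Ap g2 x + Ap g2 y) = 0" using Q[OF g, of "x + y"] by simp
    then show ?thesis using Q[OF g, of x] Q[OF g, of y]
      by (simp add: pform_add_left pform_add_right)
  qed
  have skew: "pform eps (Ap g x) y = - pform eps x (Ap g y)" if g: "g \<in> \<Gamma>" for g x y
  proof -
    have "pform eps (Ap g x) (Ap g y) + pform eps (Ap g y) (Ap g x) = 0" using pol[OF g g] .
    then have z: "pform eps (Ap g x) (Ap g y) = 0" using pform_sym[of eps "Ap g y" "Ap g x"] by simp
    have "pform eps (x + Ap g x) (y + Ap g y) = pform eps x y" using L[OF g] by blast
    then show ?thesis using z by (simp add: pform_add_left pform_add_right)
  qed
  have sq: "Ap g (Ap g y) = 0" if g: "g \<in> \<Gamma>" for g y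
  proof (rule pform_nondeg[OF epsA], rule allI)
    fix x
    have "pform eps x (Ap g (Ap g y)) = - pform eps (Ap g x) (Ap g y)" using skew[OF g] by simp
    also have "\<dots> = 0" using Q[OF g g] pol[OF g g, of x y] pform_sym[of eps "Ap g y" "Ap g x"] by simp
    finally show "pform eps x (Ap g (Ap g y)) = 0" .
  qed
  have anti: "Ap g1 (Ap g2 y) = - Ap g2 (Ap g1 y)" if g: "g1 \<in> \<Gamma>" "g2 \<in> \<Gamma>" for g1 g2 y
  proof -
    have "Ap g1 (Ap g2 y) + Ap g2 (Ap g1 y) = 0"
    proof (rule pform_nondeg[OF epsA], rule allI)
      fix x
      have "pform eps x (Ap g1 (Ap g2 y) + Ap g2 (Ap g1 y))
          = pform eps x (Ap g1 (Ap g2 y)) + pform eps x (Ap g2 (Ap g1 y))"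
        by (simp add: pform_add_right)
      also have "\<dots> = - pform eps (Ap g1 x) (Ap g2 y) - pform eps (Ap g2 x) (Ap g1 y)"
        using skew[OF g(1), of x "Ap g2 y"] skew[OF g(2), of x "Ap g1 y"] by simp
      also have "\<dots> = - (pform eps (Ap g1 x) (Ap g2 y) + pform eps (Ap g1 y) (Ap g2 x))"
        using pform_sym[of eps "Ap g2 x" "Ap g1 y"] by simp
      also have "\<dots> = 0" using pol[OF g] by simp
      finally show "pform eps x (Ap g1 (Ap g2 y) + Ap g2 (Ap g1 y)) = 0" .
    qed
    then show ?thesis by (simp add: eq_neg_iff_add_eq_0)
  qed
  have lp: "linpart g x = x + Ap g x" if "g \<in> \<Gamma>" for g x
  proof -
    have "g x = g 0 + x + Ap g x" using L[OF that] by blast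
    then show ?thesis unfolding linpart_def by simp
  qed
  obtain g1 g2 where g1: "g1 \<in> \<Gamma>" and g2: "g2 \<in> \<Gamma>" and nc: "linpart g1 \<circ> linpart g2 \<noteq> linpart g2 \<circ> linpart g1"
    using assms(6) unfolding is_abelian_def hol_def by blast
  then obtain x where ncx: "linpart g1 (linpart g2 x) \<noteq> linpart g2 (linpart g1 x)"
    by (auto simp: fun_eq_iff)
  have lin1: "linear (Ap g1)" and lin2: "linear (Ap g2)" using L g1 g2 by blast+
  have "linpart g1 (linpart g2 x) = x + Ap g2 x + Ap g1 x + Ap g1 (Ap g2 x)"
    using lp[OF g1] lp[OF g2] linear_add[OF lin1] by (simp add: algebra_simps)
  moreover have "linpart g2 (linpart g1 x) = x + Ap g1 x + Ap g2 x + Ap g2 (Ap g1 x)"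
    using lp[OF g1] lp[OF g2] linear_add[OF lin2] by (simp add: algebra_simps)
  ultimately have neq: "Ap g1 (Ap g2 x) \<noteq> Ap g2 (Ap g1 x)" using ncx by (simp add: algebra_simps)
  define C where "C y = Ap g1 (Ap g2 y)" for y
  define u where "u = C x"
  have u0: "u \<noteq> 0" using neq anti[OF g1 g2, of x] unfolding u_def C_def by auto
  have Cskew: "pform eps (C a) b = - pform eps a (C b)" for a b
  proof -
    have "pform eps (C a) b = - pform eps (Ap g2 a) (Ap g1 b)" unfolding C_def using skew[OF g1] by simp
    also have "\<dots> = pform eps a (Ap g2 (Ap g1 b))" using skew[OF g2] by simp
    also have "\<dots> = - pform eps a (C b)" unfolding C_def using anti[OF g2 g1, of b]
      by (simp add: pform_minus_right)
    finally show ?thesis .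
  qed
  define q where "q = (\<chi> i. eps i * u $ i)"
  have uq: "pform eps u q \<noteq> 0" unfolding q_def using pform_self_J[OF epsA] u0 by simp
  define w where "w = C q"
  have w0: "w \<noteq> 0"
  proof
    assume "w = 0"
    then have "pform eps x (C q) = 0" unfolding w_def by (simp add: pform_zero_right)
    then show False using uq Cskew[of x q] unfolding u_def by simp
  qed
  have wq: "pform eps w q = 0" using Cskew[of q q] pform_sym[of eps q "C q"] unfolding w_def by simp
  have wspan: "w \<notin> span {u}"
  proof
    assume "w \<in> span {u}"
    then obtain c where c: "w = c *\<^sub>R u" by (auto simp: span_singleton)
    then have "c * pform eps u q = 0" using wq by (simp add: pform_scale_left)
    then have "c = 0" using uq by simp
    then show False using c w0 by simp
  qed
  have wu: "w \<noteq> u" using wspan span_base[of u "{u}"] by auto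
  have indS: "independent {w, u}"
    using wspan u0 wu by (simp add: independent_insert)
  have cardS: "card {w, u} = 2" using wu by simp
  have Crange: "C y \<in> range (Ap g1)" for y unfolding C_def by simp
  have A2C: "Ap g2 (C y) = 0" for y
    unfolding C_def using anti[OF g2 g1, of "Ap g2 y"] sq[OF g2, of y] linear_0[OF lin1] by simp
  have CinW: "C y \<in> Ap g2 ` range (Ap g1)" for y
  proof -
    have "C y = - Ap g2 (Ap g1 y)" unfolding C_def using anti[OF g1 g2] by simp
    also have "\<dots> = Ap g2 (Ap g1 (- y))" using linear_neg[OF lin1] linear_neg[OF lin2] by simp
    finally show ?thesis by blast
  qed
  obtain T1 where T1: "T1 \<subseteq> range (Ap g1)" "independent ({w, u} \<union> T1)" "card ({w, u} \<union> T1) = 2 + 2"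
    using indep_ext[OF lin2 indS _ indS, of "range (Ap g1)"] A2C CinW cardS
    unfolding w_def u_def by auto
  define V1 where "V1 = {w, u} \<union> T1"
  have V1r: "V1 \<subseteq> range (Ap g1)" unfolding V1_def w_def u_def using T1(1) Crange by auto
  have V1k: "\<forall>v\<in>V1. Ap g1 v = 0" using V1r sq[OF g1] by auto
  obtain T2 where T2: "independent (V1 \<union> T2)" "card (V1 \<union> T2) = card V1 + card V1"
    using indep_ext[OF lin1 T1(2)[folded V1_def] V1k T1(2)[folded V1_def], of UNIV] V1r by auto
  have "card (V1 \<union> T2) \<le> dim (UNIV :: (real^'n) set)"
    using independent_card_le_dim[OF _ T2(1)] by blast
  then have n8: "8 \<le> CARD('n)" using T2(2) T1(3) V1_def by simp
  have "{i. eps i = 1} \<union> {i. eps i = -1} = UNIV" using epsA by auto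
  moreover have "{i. eps i = 1} \<inter> {i. eps i = -1} = {}" by auto
  ultimately have "r + s = CARD('n)" using assms(2,3)
    by (metis card_Un_disjoint finite)
  then show ?thesis using n8 by simp
qed

end
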